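(* With $g=\delta_{\{0\}}$ on $c_c$, we have $\partial(f+g)(0)=\ell^2$, whereas $\partial f(0)+\partial g(0)=\emptyset$. In particular $\partial(f+g)(0)\neq\partial f(0)+\partial g(0)$, although $0\in\operatorname{core}(\operatorname{dom} f-\operatorname{dom} g)$ and both $f$ and $g$ are convex and lower semicontinuous.
   Context: Let $c_c$ be the space of finitely supported real sequences with the $\ell^2$-norm; its dual is identified with $\ell^2$ via $\langle z,y\rangle=\sum_n z_ny_n$. Let $f\colon c_c\to\mathbb{R}$, $f(x)=\sum_{n=1}^\infty \frac{n^2}{2}(x_n-n^{-2})^2$. For convex $h\colon c_c\to(-\infty,\infty]$ and $x$ with $h(x)<\infty$, $\partial h(x)=\{z\in\ell^2:\forall y\in c_c:\ h(y)\ge h(x)+\langle z,y-x\rangle\}$. $\delta_{\{0\}}$ is the indicator function of $\{0\}$, $\operatorname{dom}h=\{x:h(x)<\infty\}$, and $\operatorname{core}$ denotes the algebraic interior. *)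

theory Defs
  imports "HOL-Analysis.Analysis" "HOL-Library.Extended_Real" "HOL-Library.Liminf_Limsup"
begin

(* Sequences are indexed from 0; index k here corresponds to index n = k+1 in the paper. *)

definition cc :: "(nat \<Rightarrow> real) set" where
  "cc = {x. finite {n. x n \<noteq> 0}}"

definition l2 :: "(nat \<Rightarrow> real) set" where
  "l2 = {z. summable (\<lambda>n. (z n)\<^sup>2)}"

definition l2norm :: "(nat \<Rightarrow> real) \<Rightarrow> real" where
  "l2norm x = sqrt (\<Sum>n. (x n)\<^sup>2)"

definition pairing :: "(nat \<Rightarrow> real) \<Rightarrow> (nat \<Rightarrow> real) \<Rightarrow> real" where
  "pairing z y = (\<Sum>n. z n * y n)"

definition fP :: "(nat \<Rightarrow> real) \<Rightarrow> real" where
  "fP x = (\<Sum>k. (real (k+1))\<^sup>2 / 2 * (x k - 1 / (real (k+1))\<^sup>2)\<^sup>2)"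

definition gP :: "(nat \<Rightarrow> real) \<Rightarrow> ereal" where
  "gP x = (if x = (\<lambda>n. 0) then 0 else \<infinity>)"

definition subdiff :: "((nat \<Rightarrow> real) \<Rightarrow> ereal) \<Rightarrow> (nat \<Rightarrow> real) \<Rightarrow> (nat \<Rightarrow> real) set" where
  "subdiff h x = {z \<in> l2. \<forall>y\<in>cc. h y \<ge> h x + ereal (pairing z (\<lambda>n. y n - x n))}"

definition domE :: "((nat \<Rightarrow> real) \<Rightarrow> ereal) \<Rightarrow> (nat \<Rightarrow> real) set" where
  "domE h = {x \<in> cc. h x < \<infinity>}"

definition core :: "(nat \<Rightarrow> real) set \<Rightarrow> (nat \<Rightarrow> real) set" where
  "core A = {x \<in> A. \<forall>v\<in>cc. \<exists>\<delta>>0. \<forall>t. 0 \<le> t \<and> t \<le> \<delta> \<longrightarrow> (\<lambda>n. x n + t * v n) \<in> A}"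

definition convex_cc :: "((nat \<Rightarrow> real) \<Rightarrow> ereal) \<Rightarrow> bool" where
  "convex_cc h \<longleftrightarrow> (\<forall>x\<in>cc. \<forall>y\<in>cc. \<forall>t::real. 0 \<le> t \<and> t \<le> 1 \<longrightarrow>
      h (\<lambda>n. (1 - t) * x n + t * y n) \<le> ereal (1 - t) * h x + ereal t * h y)"

(* lower semicontinuity on c_c w.r.t. the l2 norm (sequential, equivalent in metric spaces) *)
definition lsc_cc :: "((nat \<Rightarrow> real) \<Rightarrow> ereal) \<Rightarrow> bool" where
  "lsc_cc h \<longleftrightarrow> (\<forall>x\<in>cc. \<forall>s::nat \<Rightarrow> (nat \<Rightarrow> real). (\<forall>k. s k \<in> cc) \<and>
      (\<lambda>k. l2norm (\<lambda>n. s k n - x n)) \<longlonglongrightarrow> 0 \<longrightarrow> h x \<le> liminf (\<lambda>k. h (s k)))"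

end

theory Submission
  imports Defs
begin

definition ft :: "(nat \<Rightarrow> real) \<Rightarrow> nat \<Rightarrow> real" where
  "ft x k = (real (k+1))\<^sup>2 / 2 * (x k - 1 / (real (k+1))\<^sup>2)\<^sup>2"

lemma fP_ft: "fP x = suminf (ft x)"
  unfolding fP_def ft_def by simp

lemma cc_bound: "x \<in> cc \<Longrightarrow> \<exists>N. \<forall>k\<ge>N. x k = 0"
proof -
  assume "x \<in> cc"
  hence "finite {n. x n \<noteq> 0}" unfolding cc_def by simp
  then obtain m where m: "\<forall>n\<in>{n. x n \<noteq> 0}. n < m" unfolding finite_nat_set_iff_bounded by blast
  have "\<forall>k\<ge>m. x k = 0"
  proof (intro allI impI)
    fix k assume "m \<le> k"
    show "x k = 0"
    proof (rule ccontr)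
      assume "x k \<noteq> 0"
      hence "k < m" using m by simp
      thus False using \<open>m \<le> k\<close> by simp
    qed
  qed
  thus ?thesis by blast
qed

lemma ft_nonneg: "0 \<le> ft x k"
  unfolding ft_def by simp

lemma aux: "(m::real) \<noteq> 0 \<Longrightarrow> m^2/2*(0-1/m^2)^2 = (1/m^2)/2"
  by (simp add: power2_eq_square field_simps)

lemma summ_ft0: "summable (ft (\<lambda>n. 0))"
proof -
  have "summable (\<lambda>n. 1 / (1 + real n)\<^sup>2)"
    using sums_summable[OF inverse_squares_sums] by simp
  hence "summable (\<lambda>n. (1 / (1 + real n)\<^sup>2) / 2)" by (rule summable_divide)
  moreover have e: "ft (\<lambda>n. 0) = (\<lambda>k. (1 / (1 + real k)\<^sup>2) / 2)"
  proof (rule ext)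
    fix k
    have "1 + real k \<noteq> 0" by simp
    from aux[OF this] show "ft (\<lambda>n. 0) k = (1 / (1 + real k)\<^sup>2) / 2" unfolding ft_def by simp
  qed
  ultimately show ?thesis by (simp only: e)
qed

lemma summ_ft: assumes "x \<in> cc" shows "summable (ft x)"
proof -
  obtain N where N: "\<forall>k\<ge>N. x k = 0" using cc_bound[OF assms] by blast
  have "eventually (\<lambda>k. ft x k = ft (\<lambda>n. 0) k) sequentially"
    unfolding eventually_sequentially using N by (auto simp: ft_def intro!: exI[of _ N])
  thus ?thesis using summable_cong summ_ft0 by blast
qed

lemma summ_sq: assumes "x \<in> cc" shows "summable (\<lambda>n. (x n)\<^sup>2)"
proof -
  obtain N where N: "\<forall>k\<ge>N. x k = 0" using cc_bound[OF assms] by blast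
  have "eventually (\<lambda>k. (x k)\<^sup>2 = 0) sequentially"
    unfolding eventually_sequentially using N by auto
  from summable_cong[OF this] show ?thesis by simp
qed

lemma coord_le: assumes "x \<in> cc" shows "\<bar>x n\<bar> \<le> l2norm x"
proof -
  have "(x n)\<^sup>2 \<le> (\<Sum>n. (x n)\<^sup>2)"
    using sum_le_suminf[OF summ_sq[OF assms], of "{n}"] by simp
  hence "sqrt ((x n)\<^sup>2) \<le> l2norm x" unfolding l2norm_def using real_sqrt_le_mono by blast
  thus ?thesis by simp
qed

lemma cc_diff: "x \<in> cc \<Longrightarrow> y \<in> cc \<Longrightarrow> (\<lambda>n. x n - y n) \<in> cc"
proof -
  assume a: "x \<in> cc" "y \<in> cc"
  have "{n. x n - y n \<noteq> 0} \<subseteq> {n. x n \<noteq> 0} \<union> {n. y n \<noteq> 0}" by auto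
  moreover have "finite ({n. x n \<noteq> 0} \<union> {n. y n \<noteq> 0})" using a unfolding cc_def by auto
  ultimately have "finite {n. x n - y n \<noteq> 0}" by (rule finite_subset)
  thus ?thesis unfolding cc_def by simp
qed

lemma coord_conv:
  assumes "x \<in> cc" "\<forall>k. s k \<in> cc" "(\<lambda>k. l2norm (\<lambda>n. s k n - x n)) \<longlonglongrightarrow> 0"
  shows "(\<lambda>k. s k n) \<longlonglongrightarrow> x n"
proof -
  have "(\<lambda>k. s k n - x n) \<longlonglongrightarrow> 0"
  proof (rule Lim_null_comparison[OF _ assms(3)])
    show "\<forall>\<^sub>F k in sequentially. norm (s k n - x n) \<le> l2norm (\<lambda>n. s k n - x n)"
      using coord_le[OF cc_diff[OF _ assms(1)]] assms(2) by auto
  qed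
  thus ?thesis by (rule LIM_zero_cancel)
qed

lemma zero_cc: "(\<lambda>n. 0::real) \<in> cc" unfolding cc_def by simp

lemma single_cc: "(\<lambda>n. if n = k then t else 0::real) \<in> cc"
proof -
  have "{n. (if n = k then t else 0::real) \<noteq> 0} \<subseteq> {k}" by auto
  thus ?thesis unfolding cc_def using finite_subset by auto
qed

lemma fP_single:
  "fP (\<lambda>n. if n = k then t else 0) - fP (\<lambda>n. 0) = ft (\<lambda>n. if n = k then t else 0) k - ft (\<lambda>n. 0) k"
proof -
  let ?y = "\<lambda>n. if n = k then t else (0::real)"
  have "fP ?y - fP (\<lambda>n. 0) = (\<Sum>n. ft ?y n - ft (\<lambda>n. 0) n)"
    unfolding fP_ft using suminf_diff[OF summ_ft[OF single_cc] summ_ft0] by simp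
  also have "(\<lambda>n. ft ?y n - ft (\<lambda>n. 0) n) = (\<lambda>n. if n = k then ft ?y k - ft (\<lambda>n. 0) k else 0)"
    by (rule ext) (simp add: ft_def)
  also have "(\<Sum>n. (if n = k then ft ?y k - ft (\<lambda>n. 0) k else 0)) = ft ?y k - ft (\<lambda>n. 0) k"
    using sums_unique[OF sums_single[of k "\<lambda>_. ft ?y k - ft (\<lambda>n. 0) k"]] by simp
  finally show ?thesis .
qed

lemma pairing_single: "pairing z (\<lambda>n. if n = k then t else 0) = z k * t"
proof -
  have "(\<lambda>n. z n * (if n = k then t else 0)) = (\<lambda>n. if n = k then z k * t else 0)"
    by (rule ext) simp
  thus ?thesis unfolding pairing_def
    using sums_unique[OF sums_single[of k "\<lambda>_. z k * t"]] by simp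
qed

lemma sub_f_empty: "subdiff (\<lambda>x. ereal (fP x)) (\<lambda>n. 0) = {}"
proof (rule ccontr)
  assume "subdiff (\<lambda>x. ereal (fP x)) (\<lambda>n. 0) \<noteq> {}"
  then obtain z where zl: "z \<in> l2" and zs: "\<forall>y\<in>cc. ereal (fP y) \<ge> ereal (fP (\<lambda>n. 0)) + ereal (pairing z (\<lambda>n. y n - 0))"
    unfolding subdiff_def by auto
  have zk: "z k \<le> -1/2" for k
  proof -
    define c where "c = 1 / (real (k+1))\<^sup>2"
    have cpos: "c > 0" unfolding c_def by simp
    let ?y = "\<lambda>n. if n = k then c else (0::real)"
    have "ereal (fP ?y) \<ge> ereal (fP (\<lambda>n. 0)) + ereal (pairing z (\<lambda>n. ?y n - 0))"
      using bspec[OF zs single_cc[of k c]] by simp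
    hence "fP ?y \<ge> fP (\<lambda>n. 0) + z k * c" using pairing_single[of z k c] by simp
    hence "z k * c \<le> ft ?y k - ft (\<lambda>n. 0) k" using fP_single[of k c] by simp
    also have "ft ?y k - ft (\<lambda>n. 0) k = - c / 2"
      unfolding ft_def c_def using aux[of "real (k+1)"] by simp
    finally have "z k * c \<le> (-1/2) * c" by simp
    thus ?thesis using cpos by (rule mult_right_le_imp_le)
  qed
  have "(\<lambda>k. (z k)\<^sup>2) \<longlonglongrightarrow> 0" using zl unfolding l2_def mem_Collect_eq by (rule summable_LIMSEQ_zero)
  moreover have "(z k)\<^sup>2 \<ge> 1/4" for k
  proof -
    have h: "-z k \<ge> 1/2" using zk[of k] by simp
    have "(-z k)*(-z k) \<ge> (1/2)*(1/2)" by (rule mult_mono[OF h h]) (use h in auto)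
    thus ?thesis by (simp add: power2_eq_square)
  qed
  ultimately have "(1/4::real) \<le> 0" using LIMSEQ_le_const by blast
  thus False by simp
qed

lemma sub_sum: "subdiff (\<lambda>x. ereal (fP x) + gP x) (\<lambda>n. 0) = l2"
proof -
  have "ereal (fP y) + gP y \<ge> ereal (fP (\<lambda>n. 0)) + gP (\<lambda>n. 0) + ereal (pairing z (\<lambda>n. y n - 0))" for z y
  proof (cases "y = (\<lambda>n. 0)")
    case True
    have "pairing z (\<lambda>n. 0) = 0" unfolding pairing_def by simp
    then show ?thesis using True by (simp add: gP_def)
  next
    case False
    then show ?thesis by (simp add: gP_def)
  qed
  thus ?thesis unfolding subdiff_def by auto
qed

lemma l2_ne: "l2 \<noteq> {}"
proof -
  have "(\<lambda>n. 0::real) \<in> l2" unfolding l2_def by simp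
  thus ?thesis by blast
qed

lemma core_part: "(\<lambda>n. 0) \<in> core {(\<lambda>n. a n - b n) | a b. a \<in> domE (\<lambda>x. ereal (fP x)) \<and> b \<in> domE gP}"
proof -
  have mem: "w \<in> {(\<lambda>n. a n - b n) | a b. a \<in> domE (\<lambda>x. ereal (fP x)) \<and> b \<in> domE gP}" if "w \<in> cc" for w
  proof -
    have "w \<in> domE (\<lambda>x. ereal (fP x))" using that unfolding domE_def by simp
    moreover have "(\<lambda>n. 0) \<in> domE gP" using zero_cc unfolding domE_def gP_def by simp
    ultimately show ?thesis
      by (intro CollectI exI[of _ w] exI[of _ "\<lambda>n. 0::real"] conjI) simp_all
  qed
  have sc: "(\<lambda>n. 0 + t * v n) \<in> cc" if "v \<in> cc" for v t
  proof -
    have "{n. 0 + t * v n \<noteq> 0} \<subseteq> {n. v n \<noteq> 0}" by auto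
    thus ?thesis using that unfolding cc_def using finite_subset by auto
  qed
  have "\<forall>v\<in>cc. \<exists>\<delta>>0. \<forall>t. 0 \<le> t \<and> t \<le> \<delta> \<longrightarrow> (\<lambda>n. 0 + t * v n) \<in> {(\<lambda>n. a n - b n) | a b. a \<in> domE (\<lambda>x. ereal (fP x)) \<and> b \<in> domE gP}"
  proof
    fix v assume "v \<in> cc"
    show "\<exists>\<delta>>0. \<forall>t. 0 \<le> t \<and> t \<le> \<delta> \<longrightarrow> (\<lambda>n. 0 + t * v n) \<in> {(\<lambda>n. a n - b n) | a b. a \<in> domE (\<lambda>x. ereal (fP x)) \<and> b \<in> domE gP}"
      by (rule exI[of _ 1]) (simp only: mem[OF sc[OF \<open>v \<in> cc\<close>]] zero_less_one simp_thms)
  qed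
  thus ?thesis unfolding core_def using mem[OF zero_cc] by blast
qed

lemma conv_term:
  assumes "0 \<le> t" "t \<le> 1" "(w::real) \<ge> 0"
  shows "w * ((1-t)*a + t*b)^2 \<le> (1-t) * (w * a^2) + t * (w * b^2)"
proof -
  have e: "(1-t)*a^2 + t*b^2 - ((1-t)*a + t*b)^2 = t*(1-t)*(a-b)^2"
    by (simp add: power2_eq_square algebra_simps)
  have "t*(1-t)*(a-b)^2 \<ge> 0" using assms by simp
  hence "((1-t)*a + t*b)^2 \<le> (1-t)*a^2 + t*b^2" using e by linarith
  hence "w * ((1-t)*a + t*b)^2 \<le> w * ((1-t)*a^2 + t*b^2)" using assms(3) by (rule mult_left_mono)
  thus ?thesis by (simp add: algebra_simps)
qed

lemma comb_eq: "(1-t)*x + t*y - c = (1-t)*(x-c) + t*(y-(c::real))"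
  by (simp add: algebra_simps)

lemma conv_f: "convex_cc (\<lambda>x. ereal (fP x))"
  unfolding convex_cc_def
proof (intro ballI allI impI)
  fix x y and t :: real
  assume x: "x \<in> cc" and y: "y \<in> cc" and t: "0 \<le> t \<and> t \<le> 1"
  let ?z = "\<lambda>n. (1 - t) * x n + t * y n"
  have zc: "?z \<in> cc"
  proof -
    have "{n. ?z n \<noteq> 0} \<subseteq> {n. x n \<noteq> 0} \<union> {n. y n \<noteq> 0}" by auto
    moreover have "finite ({n. x n \<noteq> 0} \<union> {n. y n \<noteq> 0})" using x y unfolding cc_def by auto
    ultimately have "finite {n. ?z n \<noteq> 0}" by (rule finite_subset)
    thus ?thesis unfolding cc_def by simp
  qed
  have sx: "summable (\<lambda>k. (1-t) * ft x k)" using summ_ft[OF x] by (rule summable_mult)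
  have sy: "summable (\<lambda>k. t * ft y k)" using summ_ft[OF y] by (rule summable_mult)
  have "fP ?z \<le> (\<Sum>k. (1-t) * ft x k + t * ft y k)"
    unfolding fP_ft
  proof (rule suminf_le[OF _ summ_ft[OF zc] summable_add[OF sx sy]])
    fix k
    let ?c = "1 / (real (k+1))\<^sup>2" and ?w = "(real (k+1))\<^sup>2 / 2"
    have "?z k - ?c = (1-t)*(x k - ?c) + t*(y k - ?c)" by (rule comb_eq)
    hence "ft ?z k = ?w * ((1-t)*(x k - ?c) + t*(y k - ?c))^2" unfolding ft_def by simp
    also have "\<dots> \<le> (1-t) * (?w * (x k - ?c)^2) + t * (?w * (y k - ?c)^2)"
      using t by (intro conv_term) auto
    finally show "ft ?z k \<le> (1-t) * ft x k + t * ft y k" unfolding ft_def .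
  qed
  also have "\<dots> = (1-t) * fP x + t * fP y"
    unfolding fP_ft using suminf_add[OF sx sy] suminf_mult[OF summ_ft[OF x]] suminf_mult[OF summ_ft[OF y]]
    by simp
  finally show "ereal (fP ?z) \<le> ereal (1 - t) * ereal (fP x) + ereal t * ereal (fP y)"
    by simp
qed

lemma gP_nonneg: "gP x \<ge> 0" unfolding gP_def by simp

lemma conv_g: "convex_cc gP"
  unfolding convex_cc_def
proof (intro ballI allI impI)
  fix x y and t :: real
  assume x: "x \<in> cc" and y: "y \<in> cc" and t: "0 \<le> t \<and> t \<le> 1"
  let ?z = "\<lambda>n. (1 - t) * x n + t * y n"
  have nn: "ereal (1 - t) * gP x + ereal t * gP y \<ge> 0"
    using t gP_nonneg[of x] gP_nonneg[of y] by (intro add_nonneg_nonneg) (simp_all add: ereal_zero_le_0_iff)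
  show "gP ?z \<le> ereal (1 - t) * gP x + ereal t * gP y"
  proof (cases "?z = (\<lambda>n. 0)")
    case True
    then show ?thesis using nn by (simp add: gP_def)
  next
    case False
    have inf: "ereal (1 - t) * gP x + ereal t * gP y = \<infinity>"
    proof (cases "t = 0")
      case True
      then have "x \<noteq> (\<lambda>n. 0)" using False by auto
      then show ?thesis using True by (simp add: gP_def)
    next
      case t0: False
      show ?thesis
      proof (cases "t = 1")
        case True
        then have "y \<noteq> (\<lambda>n. 0)" using False by auto
        then show ?thesis using True by (simp add: gP_def)
      next
        case False
        have tp: "0 < t" "0 < 1 - t" using t t0 False by auto
        have "x \<noteq> (\<lambda>n. 0) \<or> y \<noteq> (\<lambda>n. 0)" using \<open>?z \<noteq> (\<lambda>n. 0)\<close> by auto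
        then show ?thesis using tp by (auto simp: gP_def)
      qed
    qed
    show ?thesis by (subst inf) simp
  qed
qed

lemma lsc_f: "lsc_cc (\<lambda>x. ereal (fP x))"
  unfolding lsc_cc_def
proof (intro ballI allI impI)
  fix x and s :: "nat \<Rightarrow> nat \<Rightarrow> real"
  assume x: "x \<in> cc" and ss: "(\<forall>k. s k \<in> cc) \<and> (\<lambda>k. l2norm (\<lambda>n. s k n - x n)) \<longlonglongrightarrow> 0"
  have part: "ereal (sum (ft x) {..<N}) \<le> liminf (\<lambda>k. ereal (fP (s k)))" for N
  proof -
    have cc: "(\<lambda>k. s k n) \<longlonglongrightarrow> x n" for n using coord_conv[OF x] ss by blast
    have "(\<lambda>k. ft (s k) n) \<longlonglongrightarrow> ft x n" for n
      unfolding ft_def by (intro tendsto_intros cc)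
    hence "(\<lambda>k. sum (ft (s k)) {..<N}) \<longlonglongrightarrow> sum (ft x) {..<N}"
      by (intro tendsto_sum) auto
    hence "(\<lambda>k. ereal (sum (ft (s k)) {..<N})) \<longlonglongrightarrow> ereal (sum (ft x) {..<N})"
      by (rule tendsto_ereal)
    hence "liminf (\<lambda>k. ereal (sum (ft (s k)) {..<N})) = ereal (sum (ft x) {..<N})"
      by (intro lim_imp_Liminf) auto
    moreover have "liminf (\<lambda>k. ereal (sum (ft (s k)) {..<N})) \<le> liminf (\<lambda>k. ereal (fP (s k)))"
    proof (rule Liminf_mono, rule always_eventually, rule allI)
      fix k
      have "sum (ft (s k)) {..<N} \<le> fP (s k)"
        unfolding fP_ft using ss by (intro sum_le_suminf summ_ft ft_nonneg) auto
      thus "ereal (sum (ft (s k)) {..<N}) \<le> ereal (fP (s k))" by simp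
    qed
    ultimately show ?thesis by simp
  qed
  have "(\<lambda>N. ereal (sum (ft x) {..<N})) \<longlonglongrightarrow> ereal (fP x)"
    unfolding fP_ft by (intro tendsto_ereal summable_LIMSEQ summ_ft x)
  thus "ereal (fP x) \<le> liminf (\<lambda>k. ereal (fP (s k)))"
    using LIMSEQ_le_const2[OF _ exI[of _ 0]] part by blast
qed

lemma lsc_g: "lsc_cc gP"
  unfolding lsc_cc_def
proof (intro ballI allI impI)
  fix x and s :: "nat \<Rightarrow> nat \<Rightarrow> real"
  assume x: "x \<in> cc" and ss: "(\<forall>k. s k \<in> cc) \<and> (\<lambda>k. l2norm (\<lambda>n. s k n - x n)) \<longlonglongrightarrow> 0"
  show "gP x \<le> liminf (\<lambda>k. gP (s k))"
  proof (cases "x = (\<lambda>n. 0)")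
    case True
    have "0 \<le> liminf (\<lambda>k. gP (s k))"
      unfolding le_Liminf_iff using gP_nonneg
      by (auto intro: always_eventually order.strict_trans2)
    then show ?thesis using True by (simp add: gP_def)
  next
    case False
    then obtain n where n: "x n \<noteq> 0" by auto
    have cc: "(\<lambda>k. s k n) \<longlonglongrightarrow> x n" using coord_conv[OF x] ss by blast
    have ev: "eventually (\<lambda>k. s k n \<noteq> 0) sequentially"
    proof (cases "x n > 0")
      case True
      then show ?thesis using order_tendstoD(1)[OF cc True] by (auto elim: eventually_mono)
    next
      case False
      then have "x n < 0" using n by simp
      then show ?thesis using order_tendstoD(2)[OF cc \<open>x n < 0\<close>] by (auto elim: eventually_mono)
    qed
    have "eventually (\<lambda>k. y < gP (s k)) sequentially" if "y < \<infinity>" for y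
      using ev
    proof (rule eventually_mono)
      fix k assume "s k n \<noteq> 0"
      then have "s k \<noteq> (\<lambda>n. 0)" by auto
      thus "y < gP (s k)" using that by (simp add: gP_def)
    qed
    hence "\<infinity> \<le> liminf (\<lambda>k. gP (s k))" unfolding le_Liminf_iff by blast
    then show ?thesis by simp
  qed
qed

theorem mainTheorem7:
  shows "subdiff (\<lambda>x. ereal (fP x) + gP x) (\<lambda>n. 0) = l2
    \<and> {(\<lambda>n. a n + b n) | a b. a \<in> subdiff (\<lambda>x. ereal (fP x)) (\<lambda>n. 0) \<and> b \<in> subdiff gP (\<lambda>n. 0)} = {}
    \<and> subdiff (\<lambda>x. ereal (fP x) + gP x) (\<lambda>n. 0)
        \<noteq> {(\<lambda>n. a n + b n) | a b. a \<in> subdiff (\<lambda>x. ereal (fP x)) (\<lambda>n. 0) \<and> b \<in> subdiff gP (\<lambda>n. 0)}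
    \<and> (\<lambda>n. 0) \<in> core {(\<lambda>n. a n - b n) | a b. a \<in> domE (\<lambda>x. ereal (fP x)) \<and> b \<in> domE gP}
    \<and> convex_cc (\<lambda>x. ereal (fP x)) \<and> convex_cc gP
    \<and> lsc_cc (\<lambda>x. ereal (fP x)) \<and> lsc_cc gP"
proof -
  have e: "{(\<lambda>n. a n + b n) | a b. a \<in> subdiff (\<lambda>x. ereal (fP x)) (\<lambda>n. 0) \<and> b \<in> subdiff gP (\<lambda>n. 0)} = {}"
    unfolding sub_f_empty by blast
  show ?thesis
    apply (intro conjI)
    apply (rule sub_sum)
    apply (rule e)
    apply (simp only: e sub_sum l2_ne simp_thms)
    apply (rule core_part)
    apply (rule conv_f)
    apply (rule conv_g)
    apply (rule lsc_f)
    apply (rule lsc_g)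
    done
qed

end
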